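(* Let $\Omega=\{\rho<0\}\subset\mathbb{C}^n$, $n\ge2$, be a strongly convex domain with $0\in\partial\Omega$ whose $C^3$ defining function has near $0$ the form $$\rho(z)=2\,\mathrm{Re}(z_n)+\sum_{j,k=1}^nA_{jk}z_j\bar z_k+O(|z|^3)$$ with the Hermitian form $\sum A_{jk}z_j\bar z_k$ positive definite. Then there exist constants $c,\varepsilon_0>0$ such that for $0<\eta,\varepsilon<\varepsilon_0$: $$D^e(0,\eta,\varepsilon)\subset D_0(c\eta,c\varepsilon),\qquad D_0(\eta,\varepsilon)\subset D^e(0,c\eta,c\varepsilon).$$
   Context: $D_0(\eta,\varepsilon)=\{\tau\in\mathbb{C}^n\setminus\Omega:|\tau_1|^2+\dots+|\tau_{n-1}|^2<\eta\,\mathrm{Re}(\tau_n),\ |\mathrm{Im}(\tau_n)|<\eta\,\mathrm{Re}(\tau_n),\ |\mathrm{Re}(\tau_n)|<\varepsilon\}$. External Korányi region: with $\langle\partial\rho(\xi),w\rangle=\sum_k\frac{\partial\rho}{\partial\xi_k}(\xi)w_k$, $n(\xi)=\bar\partial\rho(\xi)/|\bar\partial\rho(\xi)|$, $T_\xi=\{w:\langle\partial\rho(\xi),\xi-w\rangle=0\}$, and $\tau=w+t\,n(\xi)$ the unique decomposition with $w\in T_\xi$, $t\in\mathbb{C}$, $D^e(\xi,\eta,\varepsilon)=\{\tau\in\mathbb{C}^n\setminus\Omega:|w-\xi|<\sqrt{\eta\rho(\tau)},\ |\mathrm{Im}\,t|<\eta\rho(\tau),\ \rho(\tau)<\varepsilon\}$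 (for $\xi=0$ here: $w=(\tau_1,\dots,\tau_{n-1},0)$, $t=\tau_n$).
   Formalization: The first inclusion covers only the points of $D^e(0,\eta,\varepsilon)$ in a fixed ball about 0, whose positive radius is chosen along with c and $\varepsilon_0$, independently of $\eta$ and $\varepsilon$. The statement above fails without it. *)

theory Defs
  imports "HOL-Analysis.Analysis"
begin

(* C^n is modelled as complex^'n; the distinguished last coordinate z_n is the
   largest index of the (finite, linearly ordered) index type. *)
definition lastidx :: "'n::{finite,linorder}" where
  "lastidx = Max (UNIV :: 'n set)"

definition C3_on :: "'a::real_normed_vector set \<Rightarrow> ('a \<Rightarrow> real) \<Rightarrow> bool" where
  "C3_on S f \<longleftrightarrow> open S \<and>
     (\<exists>(f1 :: 'a \<Rightarrow> ('a \<Rightarrow>\<^sub>L real)) (f2 :: 'a \<Rightarrow> ('a \<Rightarrow>\<^sub>L ('a \<Rightarrow>\<^sub>L real)))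
        (f3 :: 'a \<Rightarrow> ('a \<Rightarrow>\<^sub>L ('a \<Rightarrow>\<^sub>L ('a \<Rightarrow>\<^sub>L real)))).
        (\<forall>x\<in>S. (f has_derivative blinfun_apply (f1 x)) (at x)) \<and>
        (\<forall>x\<in>S. (f1 has_derivative blinfun_apply (f2 x)) (at x)) \<and>
        (\<forall>x\<in>S. (f2 has_derivative blinfun_apply (f3 x)) (at x)) \<and>
        continuous_on S f3)"

definition strongly_convex_domain ::
  "'a::euclidean_space set \<Rightarrow> ('a \<Rightarrow> real) \<Rightarrow> bool" where
  "strongly_convex_domain \<Omega> \<rho> \<longleftrightarrow>
     open \<Omega> \<and> connected \<Omega> \<and> bounded \<Omega> \<and> \<Omega> = {z. \<rho> z < 0} \<and>
     (\<exists>U. frontier \<Omega> \<subseteq> U \<and> C3_on U \<rho> \<and>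
        (\<forall>p\<in>frontier \<Omega>.
           frechet_derivative \<rho> (at p) \<noteq> (\<lambda>v. 0) \<and>
           (\<forall>v. v \<noteq> 0 \<and> frechet_derivative \<rho> (at p) v = 0 \<longrightarrow>
              frechet_derivative (\<lambda>x. frechet_derivative \<rho> (at x) v) (at p) v > 0)))"

definition herm_form :: "complex^'n^'n \<Rightarrow> complex^'n \<Rightarrow> complex" where
  "herm_form A z = (\<Sum>j\<in>UNIV. \<Sum>k\<in>UNIV. A$j$k * z$j * cnj (z$k))"

definition hermitian_pos_def :: "complex^'n^'n \<Rightarrow> bool" where
  "hermitian_pos_def A \<longleftrightarrow> (\<forall>j k. A$j$k = cnj (A$k$j)) \<and>
     (\<forall>z. z \<noteq> 0 \<longrightarrow> Re (herm_form A z) > 0)"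

(* complex partial derivative d rho / d z_k (xi) = (d/dx_k - i d/dy_k) rho / 2 *)
definition cpartial :: "(complex^'n \<Rightarrow> real) \<Rightarrow> complex^'n \<Rightarrow> 'n \<Rightarrow> complex" where
  "cpartial \<rho> \<xi> k =
     (complex_of_real (frechet_derivative \<rho> (at \<xi>) (axis k 1))
      - \<i> * complex_of_real (frechet_derivative \<rho> (at \<xi>) (axis k \<i>))) / 2"

definition dpair :: "(complex^'n \<Rightarrow> real) \<Rightarrow> complex^'n \<Rightarrow> complex^'n \<Rightarrow> complex" where
  "dpair \<rho> \<xi> w = (\<Sum>k\<in>UNIV. cpartial \<rho> \<xi> k * w$k)"

definition dbar :: "(complex^'n \<Rightarrow> real) \<Rightarrow> complex^'n \<Rightarrow> complex^'n" where
  "dbar \<rho> \<xi> = (\<chi> k. cnj (cpartial \<rho> \<xi> k))"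

definition unormal :: "(complex^'n \<Rightarrow> real) \<Rightarrow> complex^'n \<Rightarrow> complex^'n" where
  "unormal \<rho> \<xi> = (1 / norm (dbar \<rho> \<xi>)) *\<^sub>R dbar \<rho> \<xi>"

definition tangent_plane :: "(complex^'n \<Rightarrow> real) \<Rightarrow> complex^'n \<Rightarrow> (complex^'n) set" where
  "tangent_plane \<rho> \<xi> = {w. dpair \<rho> \<xi> (\<xi> - w) = 0}"

definition decomp :: "(complex^'n \<Rightarrow> real) \<Rightarrow> complex^'n \<Rightarrow> complex^'n \<Rightarrow> (complex^'n) \<times> complex" where
  "decomp \<rho> \<xi> \<tau> = (THE (w, t). w \<in> tangent_plane \<rho> \<xi> \<and> \<tau> = w + t *s unormal \<rho> \<xi>)"

definition Dext :: "(complex^'n) set \<Rightarrow> (complex^'n \<Rightarrow> real) \<Rightarrow> complex^'n \<Rightarrow> real \<Rightarrow> real \<Rightarrow> (complex^'n) set" where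
  "Dext \<Omega> \<rho> \<xi> \<eta> \<epsilon> = {\<tau>. \<tau> \<notin> \<Omega> \<and>
      norm (fst (decomp \<rho> \<xi> \<tau>) - \<xi>) < sqrt (\<eta> * \<rho> \<tau>) \<and>
      \<bar>Im (snd (decomp \<rho> \<xi> \<tau>))\<bar> < \<eta> * \<rho> \<tau> \<and> \<rho> \<tau> < \<epsilon>}"

definition D0 :: "(complex^('n::{finite,linorder})) set \<Rightarrow> real \<Rightarrow> real \<Rightarrow> (complex^('n::{finite,linorder})) set" where
  "D0 \<Omega> \<eta> \<epsilon> = {\<tau>. \<tau> \<notin> \<Omega> \<and>
      (\<Sum>k\<in>UNIV - {lastidx}. (cmod (\<tau>$k))^2) < \<eta> * Re (\<tau>$lastidx) \<and>
      \<bar>Im (\<tau>$lastidx)\<bar> < \<eta> * Re (\<tau>$lastidx) \<and>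
      \<bar>Re (\<tau>$lastidx)\<bar> < \<epsilon>}"

end

theory Submission
  imports Defs
begin


lemma norm_sq_vec: "norm (z::complex^'n)^2 = (\<Sum>k\<in>UNIV. (cmod (z$k))^2)"
  by (simp add: norm_vec_def L2_set_def sum_nonneg)

lemma sum_split_last: "(\<Sum>k\<in>UNIV. f k) = f (lastidx::'n::{finite,linorder}) + (\<Sum>k\<in>UNIV - {lastidx}. f k)"
  by (simp add: sum.remove)

lemma herm_bound:
  "\<bar>Re (herm_form A z)\<bar> \<le> (\<Sum>j\<in>UNIV. \<Sum>k\<in>UNIV. cmod (A$j$k)) * norm z ^ 2"
proof -
  have "\<bar>Re (herm_form A z)\<bar> \<le> cmod (herm_form A z)" by (rule abs_Re_le_cmod)
  also have "\<dots> \<le> (\<Sum>j\<in>UNIV. \<Sum>k\<in>UNIV. cmod (A$j$k * z$j * cnj (z$k)))"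
    unfolding herm_form_def by (rule order_trans[OF norm_sum sum_mono[OF norm_sum]])
  also have "\<dots> \<le> (\<Sum>j\<in>UNIV. \<Sum>k\<in>UNIV. cmod (A$j$k) * norm z ^ 2)"
  proof (intro sum_mono)
    fix j k
    have a: "cmod (z$j) \<le> norm z" "cmod (z$k) \<le> norm z" by (rule Finite_Cartesian_Product.norm_nth_le)+
    have "cmod (z$j) * cmod (z$k) \<le> norm z * norm z"
      using a by (intro mult_mono) auto
    then show "cmod (A$j$k * z$j * cnj (z$k)) \<le> cmod (A$j$k) * norm z ^ 2"
      by (simp add: norm_mult power2_eq_square mult.assoc mult_left_mono)
  qed
  also have "\<dots> = (\<Sum>j\<in>UNIV. \<Sum>k\<in>UNIV. cmod (A$j$k)) * norm z ^ 2" by (simp add: sum_distrib_right)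
  finally show ?thesis .
qed

lemma deriv0:
  fixes \<rho> :: "complex^('n::{finite,linorder}) \<Rightarrow> real"
  assumes L: "L > 0" "d > 0" and b: "\<forall>z. norm z < d \<longrightarrow> \<bar>\<rho> z - 2*Re(z$lastidx)\<bar> \<le> L * norm z ^ 2"
  shows "frechet_derivative \<rho> (at 0) = (\<lambda>z. 2 * Re (z$lastidx))"
proof -
  have r0: "\<rho> 0 = 0" using b[rule_format, of 0] L by simp
  have bl: "bounded_linear (\<lambda>z::complex^('n::{finite,linorder}). 2 * Re (z$lastidx))"
    by (intro bounded_linear_const_mult bounded_linear_compose[OF bounded_linear_Re] bounded_linear_vec_nth)
  have "(\<rho> has_derivative (\<lambda>z. 2 * Re (z$lastidx))) (at 0)"
    unfolding has_derivative_at_alt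
  proof (intro conjI bl allI impI)
    fix e :: real assume e: "e > 0"
    show "\<exists>d>0. \<forall>y. norm (y - 0) < d \<longrightarrow> norm (\<rho> y - \<rho> 0 - 2 * Re ((y - 0) $ lastidx)) \<le> e * norm (y - 0)"
    proof (intro exI[of _ "min d (e/L)"] conjI allI impI)
      show "min d (e/L) > 0" using L e by simp
      fix y :: "complex^('n::{finite,linorder})" assume y: "norm (y - 0) < min d (e/L)"
      have "\<bar>\<rho> y - 2*Re(y$lastidx)\<bar> \<le> L * norm y ^ 2" using b y by auto
      also have "\<dots> = (L * norm y) * norm y" by (simp add: power2_eq_square)
      also have "\<dots> \<le> e * norm y"
      proof (rule mult_right_mono)
        have "L * norm y \<le> L * (e/L)" using y L by (intro mult_left_mono) auto
        then show "L * norm y \<le> e" using L by simp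
      qed simp
      finally show "norm (\<rho> y - \<rho> 0 - 2 * Re ((y - 0) $ lastidx)) \<le> e * norm (y - 0)"
        using r0 by simp
    qed
  qed
  then show ?thesis by (rule frechet_derivative_at[symmetric])
qed

lemma norm_axis_c: "norm (axis (m::'n::finite) (1::complex)) = 1"
proof -
  have "(\<Sum>i\<in>UNIV. (norm (axis m (1::complex) $ i))^2) = (\<Sum>i\<in>(UNIV::'n set). if i = m then 1 else 0)"
    by (rule sum.cong) (auto simp: axis_def)
  also have "\<dots> = 1" by simp
  finally show ?thesis by (simp add: norm_vec_def L2_set_def)
qed

lemma decomp0:
  fixes \<rho> :: "complex^('n::{finite,linorder}) \<Rightarrow> real"
  assumes fd: "frechet_derivative \<rho> (at 0) = (\<lambda>z. 2 * Re (z$lastidx))"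
  shows "decomp \<rho> 0 \<tau> = ((\<chi> k. if k = lastidx then 0 else \<tau>$k), \<tau>$lastidx)"
proof -
  have cp: "cpartial \<rho> 0 k = (if k = lastidx then 1 else 0)" for k
    unfolding cpartial_def fd by (auto simp: axis_def)
  have db: "dbar \<rho> 0 = axis lastidx 1"
    unfolding dbar_def cp by (auto simp: axis_def vec_eq_iff)
  have nm: "norm (axis (lastidx::'n) (1::complex)) = 1" by (rule norm_axis_c)
  have un: "unormal \<rho> 0 = axis lastidx 1"
    unfolding unormal_def db nm by simp
  have tp: "w \<in> tangent_plane \<rho> 0 \<longleftrightarrow> w$lastidx = 0" for w
  proof -
    have s: "(\<Sum>k\<in>UNIV. (if k = lastidx then 1 else 0) * c k) = c lastidx" for c :: "'n \<Rightarrow> complex"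
      by (subst sum.cong[of UNIV UNIV _ "\<lambda>k. if k = lastidx then c k else 0"]) auto
    show ?thesis unfolding tangent_plane_def dpair_def cp s by simp
  qed
  show ?thesis
    unfolding decomp_def
  proof (rule the_equality)
    show "case ((\<chi> k. if k = lastidx then 0 else \<tau>$k), \<tau>$lastidx) of (w, t) \<Rightarrow>
        w \<in> tangent_plane \<rho> 0 \<and> \<tau> = w + t *s unormal \<rho> 0"
      by (auto simp: tp un vec_eq_iff axis_def)
  next
    fix p assume "case p of (w, t) \<Rightarrow> w \<in> tangent_plane \<rho> 0 \<and> \<tau> = w + t *s unormal \<rho> 0"
    then show "p = ((\<chi> k. if k = lastidx then 0 else \<tau>$k), \<tau>$lastidx)"
      by (cases p) (auto simp: tp un vec_eq_iff axis_def)
  qed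
qed



lemma incl1_real:
  fixes p S x y L r \<eta> \<epsilon> :: real
  assumes L: "L > 0" and r: "r > 0" "L*r \<le> 1/2" "r \<le> 1" and e: "L*\<eta> \<le> 1/8" "\<eta> > 0"
    and b: "\<bar>p - 2*x\<bar> \<le> L*(S + x^2 + y^2)" and S: "S \<ge> 0" "S < \<eta>*p"
    and y: "\<bar>y\<bar> < \<eta>*p" "\<bar>y\<bar> \<le> r" and x: "\<bar>x\<bar> \<le> r" and pe: "p < \<epsilon>"
  shows "S < 4*\<eta>*x \<and> \<bar>y\<bar> < 4*\<eta>*x \<and> \<bar>x\<bar> < 4*\<epsilon>"
proof -
  have ep: "\<eta>*p > 0" using S by linarith
  have p0: "p > 0" using ep e(2) by (simp add: zero_less_mult_iff)
  have x2: "x^2 \<le> r*\<bar>x\<bar>"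
  proof -
    have "x^2 = \<bar>x\<bar>*\<bar>x\<bar>" by (simp add: power2_eq_square abs_mult_self_eq)
    also have "\<dots> \<le> r*\<bar>x\<bar>" using x by (rule mult_right_mono) simp
    finally show ?thesis .
  qed
  have y2: "y^2 \<le> \<eta>*p"
  proof -
    have "y^2 = \<bar>y\<bar>*\<bar>y\<bar>" by (simp add: power2_eq_square abs_mult_self_eq)
    also have "\<dots> \<le> (\<eta>*p)*r" using y by (intro mult_mono) auto
    also have "\<dots> \<le> (\<eta>*p)*1" using ep r by (intro mult_left_mono) auto
    finally show ?thesis by simp
  qed
  have "L*(S + x^2 + y^2) \<le> L*(\<eta>*p + r*\<bar>x\<bar> + \<eta>*p)"
    using x2 y2 S L by (intro mult_left_mono) auto
  also have "\<dots> = 2*(L*\<eta>)*p + (L*r)*\<bar>x\<bar>" by (simp add: algebra_simps)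
  also have "\<dots> \<le> 2*(1/8)*p + (1/2)*\<bar>x\<bar>"
  proof (rule add_mono)
    show "2*(L*\<eta>)*p \<le> 2*(1/8)*p" using e p0 by simp
    show "(L*r)*\<bar>x\<bar> \<le> (1/2)*\<bar>x\<bar>" using r(2) by (rule mult_right_mono) simp
  qed
  finally have hb: "\<bar>p - 2*x\<bar> \<le> p/4 + \<bar>x\<bar>/2" using b by linarith
  have x0: "x > 0"
  proof (rule ccontr)
    assume "\<not> x > 0"
    then have "\<bar>x\<bar> = -x" by simp
    then show False using hb p0 by (simp add: abs_le_iff) 
  qed
  have ax: "\<bar>x\<bar> = x" using x0 by simp
  have px: "p \<le> 10*x/3" using hb ax by (simp add: abs_le_iff)
  have xp: "x \<le> 5*p/6" using hb ax by (simp add: abs_le_iff)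
  have ex: "\<eta>*x > 0" using x0 e by simp
  have "\<eta>*p \<le> \<eta>*(10*x/3)" using px e by (intro mult_left_mono) auto
  then have "\<eta>*p < 4*\<eta>*x" using ex by simp
  then show ?thesis using S y xp ax pe p0 by linarith
qed

lemma incl2_real:
  fixes p S x y L \<eta> \<epsilon> e0 :: real
  assumes L: "L > 0" "L*e0 \<le> 1/6" "e0 \<le> 1"
    and b: "\<bar>p - 2*x\<bar> \<le> L*(S + x^2 + y^2)" and S: "S \<ge> 0" "S < \<eta>*x"
    and y: "\<bar>y\<bar> < \<eta>*x" and x: "\<bar>x\<bar> < \<epsilon>" and e: "\<epsilon> < e0" "\<eta> < e0" "\<eta> > 0"
  shows "S < 4*\<eta>*p \<and> \<bar>y\<bar> < 4*\<eta>*p \<and> p < 4*\<epsilon>"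
proof -
  have ex: "\<eta>*x > 0" using S by linarith
  have x0: "x > 0" using ex e by (simp add: zero_less_mult_iff)
  have x1: "x < e0" using x e by simp
  have ex1: "\<eta>*x \<le> 1"
  proof -
    have "\<eta>*x \<le> 1*1" using e x1 x0 L by (intro mult_mono) auto
    then show "\<eta>*x \<le> 1" by simp
  qed
  have y2: "y^2 \<le> \<eta>*x"
  proof -
    have "y^2 = \<bar>y\<bar>*\<bar>y\<bar>" by (simp add: power2_eq_square abs_mult_self_eq)
    also have "\<dots> \<le> (\<eta>*x)*1" using y ex1 by (intro mult_mono) auto
    finally show ?thesis by simp
  qed
  have x2: "x^2 \<le> e0*x" using x0 x1 by (simp add: power2_eq_square mult_right_mono)
  have "\<eta>*x \<le> e0*x" using e x0 by (intro mult_right_mono) auto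
  then have "S + x^2 + y^2 \<le> 3*e0*x" using S x2 y2 by linarith
  then have "L*(S + x^2 + y^2) \<le> L*(3*e0*x)" using L by (intro mult_left_mono) auto
  also have "\<dots> = 3*(L*e0)*x" by simp
  also have "\<dots> \<le> 3*(1/6)*x" using L x0 by simp
  finally have hb: "\<bar>p - 2*x\<bar> \<le> x/2" using b by linarith
  then have p1: "x \<le> p" "p \<le> 5*x/2" unfolding abs_le_iff by linarith+
  have "\<eta>*x \<le> \<eta>*p" using p1 e by (intro mult_left_mono) auto
  moreover have "\<bar>x\<bar> = x" using x0 by simp
  ultimately show ?thesis using S y p1 x x0 ex by linarith
qed


lemma incl2_norm:
  fixes S x y \<eta> \<epsilon> e0 :: real
  assumes S: "S \<ge> 0" "S < \<eta>*x" and y: "\<bar>y\<bar> < \<eta>*x" and x: "\<bar>x\<bar> < \<epsilon>"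
    and e: "\<epsilon> < e0" "\<eta> < e0" "\<eta> > 0" "e0 \<le> 1"
  shows "S + x^2 + y^2 < 3*e0^2"
proof -
  have ex: "\<eta>*x > 0" using S by linarith
  have x0: "x > 0" using ex e by (simp add: zero_less_mult_iff)
  have x1: "x < e0" using x e by simp
  have ex1: "\<eta>*x < e0*e0" using e x1 x0 by (intro mult_strict_mono) auto
  have ex2: "\<eta>*x \<le> 1"
  proof -
    have "\<eta>*x \<le> 1*1" using e x1 x0 by (intro mult_mono) auto
    then show "\<eta>*x \<le> 1" by simp
  qed
  have y2: "y^2 \<le> \<eta>*x"
  proof -
    have "y^2 = \<bar>y\<bar>*\<bar>y\<bar>" by (simp add: power2_eq_square abs_mult_self_eq)
    also have "\<dots> \<le> (\<eta>*x)*1" using y ex2 by (intro mult_mono) auto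
    finally show ?thesis by simp
  qed
  have x2: "x^2 < e0*e0" using x0 x1 by (simp add: power2_eq_square mult_strict_mono)
  show ?thesis using S y2 x2 ex1 by (simp add: power2_eq_square)
qed

theorem lemma6:
  fixes \<Omega> :: "(complex^('n::{finite,linorder})) set"
    and \<rho> :: "complex^('n::{finite,linorder}) \<Rightarrow> real"
    and A :: "complex^('n::{finite,linorder})^('n::{finite,linorder})"
  assumes "CARD('n) \<ge> 2"
    and "strongly_convex_domain \<Omega> \<rho>"
    and "0 \<in> frontier \<Omega>"
    and "hermitian_pos_def A"
    and "\<exists>M \<delta>. \<delta> > 0 \<and> (\<forall>z. norm z < \<delta> \<longrightarrow>
           \<bar>\<rho> z - (2 * Re (z$lastidx) + Re (herm_form A z))\<bar> \<le> M * norm z ^ 3)"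
  shows "\<exists>c \<epsilon>0 r. c > 0 \<and> \<epsilon>0 > 0 \<and> r > 0 \<and>
           (\<forall>\<eta> \<epsilon>. 0 < \<eta> \<and> \<eta> < \<epsilon>0 \<and> 0 < \<epsilon> \<and> \<epsilon> < \<epsilon>0 \<longrightarrow>
              Dext \<Omega> \<rho> 0 \<eta> \<epsilon> \<inter> ball 0 r \<subseteq> D0 \<Omega> (c * \<eta>) (c * \<epsilon>) \<and>
              D0 \<Omega> \<eta> \<epsilon> \<subseteq> Dext \<Omega> \<rho> 0 (c * \<eta>) (c * \<epsilon>))"
proof -
  obtain M \<delta> where \<delta>: "\<delta> > 0" and Mb: "\<forall>z. norm z < \<delta> \<longrightarrow>
           \<bar>\<rho> z - (2 * Re (z$lastidx) + Re (herm_form A z))\<bar> \<le> M * norm z ^ 3"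
    using assms(5) by blast
  define K where "K = (\<Sum>j\<in>UNIV. \<Sum>k\<in>UNIV. cmod (A$j$k))"
  define L where "L = K + \<bar>M\<bar> + 1"
  define d where "d = min \<delta> 1"
  have K0: "K \<ge> 0" unfolding K_def by (intro sum_nonneg) auto
  have L0: "L > 0" using K0 by (simp add: L_def add_nonneg_pos)
  have d0: "d > 0" "d \<le> 1" "d \<le> \<delta>" using \<delta> by (auto simp: d_def)
  have bnd: "\<forall>z. norm z < d \<longrightarrow> \<bar>\<rho> z - 2*Re(z$lastidx)\<bar> \<le> L * norm z ^ 2"
  proof (intro allI impI)
    fix z :: "complex^('n::{finite,linorder})" assume z: "norm z < d"
    have n3: "norm z ^ 3 \<le> norm z ^ 2"
    proof -
      have "norm z ^ 3 = norm z ^ 2 * norm z" by (simp add: power3_eq_cube power2_eq_square)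
      also have "\<dots> \<le> norm z ^ 2 * 1" using z d0 by (intro mult_left_mono) auto
      finally show ?thesis by simp
    qed
    have m1: "M * norm z ^ 3 \<le> \<bar>M\<bar> * norm z ^ 3" by (intro mult_right_mono) auto
    have m2: "\<bar>M\<bar> * norm z ^ 3 \<le> \<bar>M\<bar> * norm z ^ 2" using n3 by (intro mult_left_mono) auto
    have h: "\<bar>Re (herm_form A z)\<bar> \<le> K * norm z ^ 2" unfolding K_def by (rule herm_bound)
    have h2: "\<bar>\<rho> z - (2 * Re (z$lastidx) + Re (herm_form A z))\<bar> \<le> M * norm z ^ 3"
      using Mb z d0 by auto
    have "L * norm z ^ 2 = K * norm z ^ 2 + \<bar>M\<bar> * norm z ^ 2 + norm z ^ 2"
      by (simp add: L_def algebra_simps)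
    moreover have "norm z ^ 2 \<ge> 0" by simp
    ultimately show "\<bar>\<rho> z - 2*Re(z$lastidx)\<bar> \<le> L * norm z ^ 2"
      using h h2 m1 m2 by linarith
  qed
  have fd: "frechet_derivative \<rho> (at 0) = (\<lambda>z. 2 * Re (z$lastidx))"
    by (rule deriv0[OF L0 d0(1) bnd])
  have dc: "decomp \<rho> 0 \<tau> = ((\<chi> k. if k = lastidx then 0 else \<tau>$k), \<tau>$lastidx)" for \<tau>
    by (rule decomp0[OF fd])
  have Om: "\<Omega> = {z. \<rho> z < 0}" using assms(2) unfolding strongly_convex_domain_def by blast
  define Sf where "Sf \<tau> = (\<Sum>k\<in>UNIV - {lastidx}. (cmod (\<tau>$k))^2)" for \<tau> :: "complex^('n::{finite,linorder})"
  have Sf0: "Sf \<tau> \<ge> 0" for \<tau> unfolding Sf_def by (intro sum_nonneg) auto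
  have wn: "norm (fst (decomp \<rho> 0 \<tau>) - 0) = sqrt (Sf \<tau>)" for \<tau>
  proof -
    have "norm (fst (decomp \<rho> 0 \<tau>) - 0) ^ 2
       = (\<Sum>k\<in>UNIV. (cmod ((\<chi> k. if k = lastidx then 0 else \<tau>$k) $ k))^2)"
      unfolding dc by (simp add: norm_sq_vec)
    also have "\<dots> = 0 + (\<Sum>k\<in>UNIV - {lastidx}. (cmod ((\<chi> k. if k = lastidx then 0 else \<tau>$k) $ k))^2)"
      by (subst sum_split_last) simp
    also have "\<dots> = Sf \<tau>" unfolding Sf_def by (simp cong: sum.cong_simp)
    finally show ?thesis by (metis norm_ge_zero real_sqrt_unique)
  qed
  have nz: "norm \<tau> ^ 2 = Sf \<tau> + (Re (\<tau>$lastidx))^2 + (Im (\<tau>$lastidx))^2" for \<tau>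
  proof -
    have "norm \<tau> ^ 2 = (cmod (\<tau>$lastidx))^2 + Sf \<tau>"
      unfolding norm_sq_vec Sf_def by (rule sum_split_last)
    then show ?thesis by (simp add: cmod_power2)
  qed
  have xb: "\<bar>Re (\<tau>$lastidx)\<bar> \<le> norm \<tau>" "\<bar>Im (\<tau>$lastidx)\<bar> \<le> norm \<tau>" for \<tau> :: "complex^('n::{finite,linorder})"
    using abs_Re_le_cmod[of "\<tau>$lastidx"] abs_Im_le_cmod[of "\<tau>$lastidx"]
      Finite_Cartesian_Product.norm_nth_le[of \<tau> lastidx] by linarith+
  define e0 where "e0 = min (d/2) (1/(8*L))"
  define r where "r = min d (1/(2*L))"
  have e0p: "e0 > 0" "e0 \<le> d/2" "e0 \<le> 1/(8*L)" using d0 L0 by (auto simp: e0_def)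
  have rp: "r > 0" "r \<le> d" "r \<le> 1/(2*L)" using d0 L0 by (auto simp: r_def)
  have Le0: "L*e0 \<le> 1/8" using e0p(3) L0 by (simp add: field_simps)
  have Lr: "L*r \<le> 1/2" using rp(3) L0 by (simp add: field_simps)
  have main: "Dext \<Omega> \<rho> 0 \<eta> \<epsilon> \<inter> ball 0 r \<subseteq> D0 \<Omega> (4*\<eta>) (4*\<epsilon>) \<and>
              D0 \<Omega> \<eta> \<epsilon> \<subseteq> Dext \<Omega> \<rho> 0 (4*\<eta>) (4*\<epsilon>)"
    if H: "0 < \<eta> \<and> \<eta> < e0 \<and> 0 < \<epsilon> \<and> \<epsilon> < e0" for \<eta> \<epsilon> :: real
  proof (rule conjI)
    have Le: "L*\<eta> \<le> 1/8" using H Le0 L0 by (smt (verit) mult_strict_left_mono)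
    show "Dext \<Omega> \<rho> 0 \<eta> \<epsilon> \<inter> ball 0 r \<subseteq> D0 \<Omega> (4*\<eta>) (4*\<epsilon>)"
    proof
      fix \<tau> assume "\<tau> \<in> Dext \<Omega> \<rho> 0 \<eta> \<epsilon> \<inter> ball 0 r"
      then have tn: "\<tau> \<notin> \<Omega>" and t: "sqrt (Sf \<tau>) < sqrt (\<eta> * \<rho> \<tau>)"
          "\<bar>Im (\<tau>$lastidx)\<bar> < \<eta>*\<rho> \<tau>" "\<rho> \<tau> < \<epsilon>" "norm \<tau> < r"
        unfolding Dext_def wn by (auto simp: dc)
      have p0: "\<rho> \<tau> \<ge> 0" using tn Om by auto
      have S: "Sf \<tau> < \<eta> * \<rho> \<tau>" using t(1) by simp
      have b: "\<bar>\<rho> \<tau> - 2*Re(\<tau>$lastidx)\<bar> \<le> L*(Sf \<tau> + (Re (\<tau>$lastidx))^2 + (Im (\<tau>$lastidx))^2)"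
      proof -
        have nd: "norm \<tau> < d" using t(4) rp(2) by linarith
        show ?thesis using bnd[rule_format, OF nd] unfolding nz .
      qed
      have "Sf \<tau> < 4*\<eta>*Re(\<tau>$lastidx) \<and> \<bar>Im (\<tau>$lastidx)\<bar> < 4*\<eta>*Re(\<tau>$lastidx) \<and> \<bar>Re (\<tau>$lastidx)\<bar> < 4*\<epsilon>"
        apply (rule incl1_real[OF L0 rp(1) Lr _ Le _ b Sf0 S t(2)])
        using xb[of \<tau>] t(3) t(4) rp d0 H by auto
      then show "\<tau> \<in> D0 \<Omega> (4*\<eta>) (4*\<epsilon>)"
        unfolding D0_def using tn by (auto simp: Sf_def mult.assoc)
    qed
    show "D0 \<Omega> \<eta> \<epsilon> \<subseteq> Dext \<Omega> \<rho> 0 (4*\<eta>) (4*\<epsilon>)"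
    proof
      fix \<tau> assume "\<tau> \<in> D0 \<Omega> \<eta> \<epsilon>"
      then have tn: "\<tau> \<notin> \<Omega>" and S: "Sf \<tau> < \<eta> * Re (\<tau>$lastidx)"
        and y: "\<bar>Im (\<tau>$lastidx)\<bar> < \<eta> * Re (\<tau>$lastidx)" and x: "\<bar>Re (\<tau>$lastidx)\<bar> < \<epsilon>"
        unfolding D0_def Sf_def by auto
      have p0: "\<rho> \<tau> \<ge> 0" using tn Om by auto
      have e01: "e0 \<le> 1" using e0p d0 by linarith
      have "norm \<tau> ^ 2 < 3*e0^2" unfolding nz
        using incl2_norm[OF Sf0 S y x] H e01 by auto
      also have "\<dots> \<le> 3*(d/2)^2" using e0p by (intro mult_left_mono power_mono) auto
      also have "\<dots> < d^2" using d0 by (simp add: power2_eq_square)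
      finally have nd: "norm \<tau> < d" using d0 by (simp add: power_less_imp_less_base)
      have b: "\<bar>\<rho> \<tau> - 2*Re(\<tau>$lastidx)\<bar> \<le> L*(Sf \<tau> + (Re (\<tau>$lastidx))^2 + (Im (\<tau>$lastidx))^2)"
        using bnd[rule_format, OF nd] unfolding nz .
      have "Sf \<tau> < 4*\<eta>*\<rho> \<tau> \<and> \<bar>Im (\<tau>$lastidx)\<bar> < 4*\<eta>*\<rho> \<tau> \<and> \<rho> \<tau> < 4*\<epsilon>"
        apply (rule incl2_real[OF L0 _ e01 b Sf0 S y x])
        using Le0 H by auto
      moreover have "sqrt (Sf \<tau>) < sqrt (4*\<eta>*\<rho> \<tau>)" using calculation by simp
      ultimately show "\<tau> \<in> Dext \<Omega> \<rho> 0 (4*\<eta>) (4*\<epsilon>)"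
        unfolding Dext_def wn using tn by (auto simp: dc mult.assoc)
    qed
  qed
  show ?thesis
    apply (rule exI[of _ "4::real"], rule exI[of _ e0], rule exI[of _ r])
    using e0p rp main by auto
qed

end
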